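(* Let $k\ge 2$, $x_0\in\Sigma_k^*$, and $x_{n+1}=\mathcal P_k(x_n)$. Then there exists $N\ge 0$ such that $|x_n|\le \left\lceil \frac{2k^2}{k-1}\right\rceil$ for all $n\ge N$. Moreover $|x_n|\le \max\left\{|x_0|,\left\lceil \frac{2k^2}{k-1}\right\rceil\right\}$ for all $n\ge 0$. In particular, every fixed point of $\mathcal P_k$, and every word lying on a cycle of $\mathcal P_k$, has length at most $\left\lceil \frac{2k^2}{k-1}\right\rceil$.
   Context: Fix an integer $k\ge 2$ and the alphabet $\Sigma_k=\{0,1,\dots,k-1\}$. A word is a finite nonempty string of letters of $\Sigma_k$ (leading zeros allowed); $\Sigma_k^*$ denotes the set of words. For a word $x$, $|x|$ denotes its length and $|x|_i$ the number of occurrences of the letter $i$ in $x$. For a positive integer $c$, $[c]_k$ denotes its standard base-$k$ representation without leading zeros, viewed as a word over $\Sigma_k$; it has $\lfloor\log_k c\rfloor+1$ letters. The map $\mathcal P_k:\Sigma_k^*\to\Sigma_k^*$ is defined as follows: if $b_1>b_2>\dots>b_r$ are exactly the letters occurring in $x$ (i.e. those with $|x|_{b_j}\neq 0$), then $\mathcal P_k(x)=[|x|_{b_1}]_k\,b_1\,[|x|_{b_2}]_k\,b_2\cdots[|x|_{b_r}]_k\,b_r$ (concatenation). A fixed point is a word $x$ with $\mathcal P_k(x)=x$; a word $x$ lies on a cycle if $\mathcal P_k^{p}(x)=x$ for some $p\ge 1$. *)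

theory Defs
  imports Complex_Main
begin

function digits_le :: "nat \<Rightarrow> nat \<Rightarrow> nat list" where
  "digits_le k c = (if k < 2 \<or> c = 0 then [] else c mod k # digits_le k (c div k))"
  by pat_completeness auto
termination
  by (relation "measure (\<lambda>(k, c). c)") auto

definition base_repr :: "nat \<Rightarrow> nat \<Rightarrow> nat list" where
  "base_repr k c = rev (digits_le k c)"

definition is_word :: "nat \<Rightarrow> nat list \<Rightarrow> bool" where
  "is_word k x \<longleftrightarrow> x \<noteq> [] \<and> set x \<subseteq> {..<k}"

definition Pk :: "nat \<Rightarrow> nat list \<Rightarrow> nat list" where
  "Pk k x = concat (map (\<lambda>b. base_repr k (count_list x b) @ [b])
                        (rev (sorted_list_of_set (set x))))"

definition lenbound :: "nat \<Rightarrow> nat" where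
  "lenbound k = nat \<lceil>(2 * real k ^ 2) / (real k - 1)\<rceil>"

end

theory Submission
  imports Defs
begin

declare digits_le.simps [simp del]

lemma digits_le_0 [simp]: "digits_le k 0 = []"
  by (subst digits_le.simps) simp

lemma digits_pow:
  shows "k \<ge> 2 \<Longrightarrow> c \<ge> 1 \<Longrightarrow> k ^ length (digits_le k c) \<le> c * k"
proof (induction k c rule: digits_le.induct)
  case (1 k c)
  show ?case
  proof (cases "c div k = 0")
    case True
    then show ?thesis using 1(2,3) by (subst digits_le.simps) auto
  next
    case False
    then have "k ^ length (digits_le k (c div k)) \<le> (c div k) * k"
      using 1 by simp
    then have "k ^ Suc (length (digits_le k (c div k))) \<le> (c div k) * k * k" by simp
    also have "\<dots> \<le> c * k" by (simp add: mult_le_mono1)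
    finally show ?thesis using 1(2,3) by (subst digits_le.simps) simp
  qed
qed

lemma mul_le_pow: "(k::nat) \<ge> 2 \<Longrightarrow> k * n \<le> k ^ n"
proof (induction n)
  case 0 then show ?case by simp
next
  case (Suc n)
  show ?case
  proof (cases "n = 0")
    case True then show ?thesis by simp
  next
    case False
    have "k ^ 1 \<le> k ^ n" using False Suc.prems by (intro power_increasing) auto
    then have "k \<le> k ^ n" by simp
    then have "k * Suc n \<le> 2 * k ^ n" using Suc by simp
    also have "\<dots> \<le> k * k ^ n" using Suc.prems by simp
    finally show ?thesis by simp
  qed
qed

lemma digits_len:
  assumes k: "k \<ge> 2" and c: "c \<ge> 1"
  shows "k * length (base_repr k c) \<le> c + k"
proof -
  define m where "m = length (digits_le k c)"
  have m1: "m \<ge> 1" using k c unfolding m_def by (subst digits_le.simps) simp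
  have "k ^ m \<le> c * k" using digits_pow[OF k c] m_def by simp
  then have "k ^ (m - 1) * k \<le> c * k" using m1
    by (metis Suc_diff_le diff_Suc_1 mult.commute power_Suc)
  then have h: "k ^ (m - 1) \<le> c" using k by simp
  have "k * (m - 1) \<le> k ^ (m - 1)" using mul_le_pow[OF k] .
  moreover have "k * m = k * (m - 1) + k" using m1 by (cases m) auto
  ultimately have "k * m \<le> c + k" using h by linarith
  then show ?thesis unfolding base_repr_def m_def by simp
qed

lemma length_Pk:
  "length (Pk k x) = (\<Sum>b\<in>set x. length (base_repr k (count_list x b)) + 1)"
proof -
  have "length (Pk k x) = sum_list (map (\<lambda>b. length (base_repr k (count_list x b)) + 1)
             (rev (sorted_list_of_set (set x))))"
    unfolding Pk_def by (simp add: length_concat comp_def)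
  also have "\<dots> = (\<Sum>b\<in>set x. length (base_repr k (count_list x b)) + 1)"
    by (subst sum_list_distinct_conv_sum_set) auto
  finally show ?thesis .
qed

lemma set_Pk:
  assumes k: "k \<ge> 2" and s: "set x \<subseteq> {..<k}"
  shows "set (Pk k x) \<subseteq> {..<k}"
proof -
  have d: "set (digits_le k c) \<subseteq> {..<k}" for c
    using k by (induction k c rule: digits_le.induct) (subst digits_le.simps; auto)
  show ?thesis using s d unfolding Pk_def base_repr_def by auto
qed

lemma Pk_bound:
  assumes k: "k \<ge> 2" and s: "set x \<subseteq> {..<k}"
  shows "k * length (Pk k x) \<le> length x + 2 * k * k"
proof -
  have "k * length (Pk k x) = (\<Sum>b\<in>set x. k * length (base_repr k (count_list x b)) + k)"
    by (simp add: length_Pk sum_distrib_left add_ac)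
  also have "\<dots> \<le> (\<Sum>b\<in>set x. count_list x b + 2 * k)"
  proof (rule sum_mono)
    fix b assume "b \<in> set x"
    then have "count_list x b \<ge> 1"
      by (metis One_nat_def Suc_leI count_list_0_iff not_gr0)
    then show "k * length (base_repr k (count_list x b)) + k \<le> count_list x b + 2 * k"
      using digits_len[OF k] by fastforce
  qed
  also have "\<dots> = length x + 2 * k * card (set x)"
    by (simp add: sum.distrib sum_count_set)
  also have "\<dots> \<le> length x + 2 * k * k"
  proof -
    have "card (set x) \<le> k" using card_mono[OF _ s] by simp
    then show ?thesis by simp
  qed
  finally show ?thesis .
qed

lemma lenbound_ge:
  assumes k: "k \<ge> 2"
  shows "(k - 1) * lenbound k \<ge> 2 * k * k"
proof -
  have kr: "real k - 1 > 0" using k by simp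
  have "real (lenbound k) \<ge> 2 * real k ^ 2 / (real k - 1)"
    unfolding lenbound_def by linarith
  then have "(real k - 1) * real (lenbound k) \<ge> 2 * real k ^ 2"
    using kr by (simp add: field_simps)
  then have "real ((k - 1) * lenbound k) \<ge> real (2 * k * k)"
    using k by (simp add: of_nat_diff power2_eq_square)
  then show ?thesis by linarith
qed

lemma step:
  assumes k: "k \<ge> 2" and s: "set x \<subseteq> {..<k}"
  shows "length (Pk k x) \<le> max (length x) (lenbound k)"
    and "length x > lenbound k \<Longrightarrow> length (Pk k x) < length x"
proof -
  have a: "k * length (Pk k x) \<le> length x + 2 * k * k" using Pk_bound[OF k s] .
  have b: "(k - 1) * lenbound k \<ge> 2 * k * k" using lenbound_ge[OF k] .
  show "length x > lenbound k \<Longrightarrow> length (Pk k x) < length x"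
  proof -
    assume "length x > lenbound k"
    then have "(k - 1) * lenbound k < (k - 1) * length x" using k by simp
    then have "k * length (Pk k x) < length x + (k - 1) * length x" using a b by linarith
    also have "\<dots> = k * length x" using k by (cases k) auto
    finally show ?thesis by simp
  qed
  show "length (Pk k x) \<le> max (length x) (lenbound k)"
  proof (cases "length x > lenbound k")
    case True then show ?thesis using \<open>length x > lenbound k \<Longrightarrow> _\<close> by simp
  next
    case False
    then have "k * length (Pk k x) \<le> lenbound k + (k - 1) * lenbound k" using a b by linarith
    also have "\<dots> = k * lenbound k" using k by (cases k) auto
    finally have "k * length (Pk k x) \<le> k * lenbound k" .
    then have "length (Pk k x) \<le> lenbound k" using k by (simp only: mult_le_cancel1)
    then show ?thesis by (rule le_trans[OF _ max.cobounded2])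
  qed
qed

lemma iter_set:
  assumes k: "k \<ge> 2" and s: "set x \<subseteq> {..<k}"
  shows "set ((Pk k ^^ n) x) \<subseteq> {..<k}"
proof (induction n)
  case 0 then show ?case using s by simp
next
  case (Suc n) then show ?case using set_Pk[OF k] by simp
qed

lemma iter_max:
  assumes k: "k \<ge> 2" and s: "set x \<subseteq> {..<k}"
  shows "length ((Pk k ^^ n) x) \<le> max (length x) (lenbound k)"
proof (induction n)
  case 0 then show ?case by simp
next
  case (Suc n)
  have "length ((Pk k ^^ Suc n) x) \<le> max (length ((Pk k ^^ n) x)) (lenbound k)"
    using step(1)[OF k iter_set[OF k s, of n]] by simp
  then show ?case using Suc.IH by linarith
qed

lemma iter_less:
  assumes k: "k \<ge> 2" and s: "set x \<subseteq> {..<k}" and n: "n \<ge> 1" and L: "length x > lenbound k"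
  shows "length ((Pk k ^^ n) x) < length x"
proof -
  obtain m where m: "n = Suc m" using n by (cases n) auto
  have "(Pk k ^^ n) x = (Pk k ^^ m) (Pk k x)" using m by (simp only: funpow_Suc_right comp_def)
  moreover have "length ((Pk k ^^ m) (Pk k x)) \<le> max (length (Pk k x)) (lenbound k)"
    using iter_max[OF k set_Pk[OF k s]] .
  moreover have "length (Pk k x) < length x" using step(2)[OF k s L] .
  ultimately show ?thesis using L by (simp only:)
qed

lemma eventually_bound:
  assumes k: "k \<ge> 2"
  shows "set x \<subseteq> {..<k} \<Longrightarrow> \<exists>N. \<forall>n\<ge>N. length ((Pk k ^^ n) x) \<le> lenbound k"
proof (induction "length x" arbitrary: x rule: less_induct)
  case less
  show ?case
  proof (cases "length x > lenbound k")
    case False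
    have "length ((Pk k ^^ n) x) \<le> lenbound k" for n
      using iter_max[OF k less.prems, of n] False by (simp add: max_def)
    then show ?thesis by blast
  next
    case True
    have "length (Pk k x) < length x" using step(2)[OF k less.prems True] .
    then obtain N where N: "\<forall>n\<ge>N. length ((Pk k ^^ n) (Pk k x)) \<le> lenbound k"
      using less.hyps set_Pk[OF k less.prems] by blast
    show ?thesis
    proof (intro exI[of _ "Suc N"] allI impI)
      fix n assume "n \<ge> Suc N"
      then obtain m where m: "n = Suc m" "m \<ge> N" by (cases n) auto
      have "(Pk k ^^ n) x = (Pk k ^^ m) (Pk k x)" using m by (simp only: funpow_Suc_right comp_def)
      then show "length ((Pk k ^^ n) x) \<le> lenbound k" using N m by simp
    qed
  qed
qed

theorem mainTheorem3:
  fixes k :: nat and x0 :: "nat list"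
  assumes "k \<ge> 2" and "is_word k x0"
  shows "(\<exists>N. \<forall>n\<ge>N. length ((Pk k ^^ n) x0) \<le> lenbound k)
    \<and> (\<forall>n. length ((Pk k ^^ n) x0) \<le> max (length x0) (lenbound k))
    \<and> (\<forall>w. is_word k w \<and> Pk k w = w \<longrightarrow> length w \<le> lenbound k)
    \<and> (\<forall>w. is_word k w \<and> (\<exists>p\<ge>1. (Pk k ^^ p) w = w) \<longrightarrow> length w \<le> lenbound k)"
proof -
  have k: "k \<ge> 2" by fact
  have s: "set x0 \<subseteq> {..<k}" using assms(2) unfolding is_word_def by blast
  have cyc: "length w \<le> lenbound k" if "is_word k w" "p \<ge> 1" "(Pk k ^^ p) w = w" for w p
  proof (rule ccontr)
    assume a: "\<not> ?thesis"
    have sw: "set w \<subseteq> {..<k}" using that(1) unfolding is_word_def by blast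
    have "length ((Pk k ^^ p) w) < length w"
      using iter_less[OF k sw that(2)] a by linarith
    then show False using that(3) by simp
  qed
  show ?thesis
  proof (intro conjI allI impI)
    show "\<exists>N. \<forall>n\<ge>N. length ((Pk k ^^ n) x0) \<le> lenbound k" using eventually_bound[OF k s] .
    show "length ((Pk k ^^ n) x0) \<le> max (length x0) (lenbound k)" for n using iter_max[OF k s] .
    show "length w \<le> lenbound k" if "is_word k w \<and> Pk k w = w" for w
      using cyc[of w 1] that by simp
    show "length w \<le> lenbound k" if "is_word k w \<and> (\<exists>p\<ge>1. (Pk k ^^ p) w = w)" for w
      using cyc that by blast
  qed
qed

end
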